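(* Let $(\mathbf F,\mathbf A)$ be an enriched cut-free Gentzen $ru$-frame with $\mathbf F=(G,T,N,K)$. For all $a,b\in A$ and closed sets $X,Y$ of $\mathbf F$: (1) if $1^{\mathbf A}$ is defined, then $1^{\mathbf A}\in\gamma_N(\{\varepsilon\})\subseteq\{1^{\mathbf A}\}^{\lhd}$; (2) for $\bullet\in\{\wedge,\vee,\cdot,\backslash,/\}$: if $a\bullet^{\mathbf A}b$ is defined, $a\in X\subseteq\{a\}^{\lhd}$ and $b\in Y\subseteq\{b\}^{\lhd}$, then $a\bullet^{\mathbf A}b\in X\bullet^{\mathbf F^+}Y\subseteq\{a\bullet^{\mathbf A}b\}^{\lhd}$; (3) if $!^{\mathbf A}a$ is defined and $a\in X\subseteq\{a\}^{\lhd}$, then $!^{\mathbf A}a\in\, !X\subseteq\{!^{\mathbf A}a\}^{\lhd}$; (4) if $(\mathbf F,\mathbf A)$ is an enriched cut-free Gentzen $ruz$-frame and $0^{\mathbf A}$ is defined, then $0^{\mathbf A}\in\{\epsilon\}^{\lhd}\subseteq\{0^{\mathbf A}\}^{\lhd}$; (5) if $(\mathbf F,\mathbf A)$ is moreover an enriched Gentzen frame (i.e. satisfies [cut]), then the map $a\mapsto\{a\}^{\lhd}$ is a homomorphism of partial algebras from $\mathbf A$ to $\mathbf F^+$ (whenever $f^{\mathbf A}(\vec a)$ is defined, its image equals $f^{\mathbf F^+}$ applied to the images); (6) if $N$ is antisymmetric on $A$ ($aNb$ and $bNa$ imply $a=b$ for $a,b\in A$), then the map $a\mapsto\{a\}^{\lhd}$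 is injective.
   Context: Enriched $ru$-frame: $\mathbf F=(G,T,N,K)$ with $(G,\cdot,\varepsilon)$ a unital groupoid (not necessarily associative), $T$ a set, $N\subseteq G\times T$ nuclear (for all $x,y\in G,z\in T$ there are $x\backslash\!\!\backslash z, z/\!\!/y\in T$ with $x\cdot y\,N\,z\iff y\,N\,x\backslash\!\!\backslash z\iff x\,N\,z/\!\!/y$), $K$ a sub-unital-groupoid of $G$; an enriched $ruz$-frame additionally has $\epsilon\in T$. $X^{\rhd}=\{t\in T\mid\forall x\in X\,xNt\}$, $Y^{\lhd}=\{g\in G\mid\forall y\in Y\,gNy\}$, $\gamma_N(X)=X^{\rhd\lhd}$; closed sets are those with $\gamma_N(X)=X$. $\mathbf F^+$: universe the closed sets, $X\wedge Y=X\cap Y$, $X\vee Y=\gamma_N(X\cup Y)$, $X\cdot Y=\gamma_N(X\circ Y)$ with $X\circ Y=\{x\cdot y\mid x\in X,y\in Y\}$, $X\backslash Y=\{z\mid X\circ\{z\}\subseteq Y\}$, $Y/X=\{z\mid \{z\}\circ X\subseteq Y\}$, $!X=\gamma_N(X\cap K)$, unit $\gamma_N(\{\varepsilon\})$, and in the $ruz$ case zero $\{\epsilon\}^{\lhd}$. Enriched cut-free Gentzen $ru$-frame: a pair $(\mathbf F,\mathbf A)$ with $\mathbf F$ an enriched $ru$-frame and $\mathbf A$ a partial algebra in $\{\wedge,\vee,\cdot,\backslash,/,!,1\}$, together with injections of $A$ into $G$ and into $T$ and of $A^!=\{!^{\mathbf A}a\mid a\in\operatorname{dom}!^{\mathbf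 A}\}$ into $K$ (elements of $A$ are identified with their images; in particular $\{a\}^{\lhd}$ uses $a$ as an element of $T$), such that for all $x,y\in G$, $z\in T$, $a,a_1,a_2,b\in A$, $k\in K$ (whenever the displayed operations of $\mathbf A$ are defined): $\varepsilon\,N\,1^{\mathbf A}$; $a\,N\,a$; $\varepsilon Nz\Rightarrow 1^{\mathbf A}Nz$; $a\cdot b\,N\,z\Rightarrow a\cdot^{\mathbf A}b\,N\,z$; $xNa,\,yNb\Rightarrow x\cdot y\,N\,a\cdot^{\mathbf A}b$; $xNa,\,bNz\Rightarrow x\cdot(a\backslash^{\mathbf A}b)\,N\,z$; $a\cdot x\,N\,b\Rightarrow x\,N\,a\backslash^{\mathbf A}b$; $xNa,\,bNz\Rightarrow (b/^{\mathbf A}a)\cdot x\,N\,z$; $x\cdot a\,N\,b\Rightarrow x\,N\,b/^{\mathbf A}a$; $a_iNz\Rightarrow a_1\wedge^{\mathbf A}a_2\,N\,z$; $xNa,\,xNb\Rightarrow x\,N\,a\wedge^{\mathbf A}b$; $aNz,\,bNz\Rightarrow a\vee^{\mathbf A}b\,N\,z$; $xNa_i\Rightarrow x\,N\,a_1\vee^{\mathbf A}a_2$; $aNz\Rightarrow !^{\mathbf A}a\,N\,z$; $kNa\Rightarrow k\,N\,!^{\mathbf A}a$. An enriched cut-free Gentzen $ruz$-frame uses an enriched $ruz$-frame and a partial algebra with additional constant $0$, and also requires $0^{\mathbf A}N\epsilon$ and $xN\epsilon\Rightarrow xN0^{\mathbf A}$. An enriched Gentzen frame additionally satisfies [cut]: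 $xNa$ and $aNz$ imply $xNz$ (for $x\in G$, $a\in A$, $z\in T$). *)

theory Defs
  imports Main
begin

text \<open>Enriched ru-frame F = (G,T,N,K): G is the type 'g, T the type 't.\<close>
record ('g, 't) ruframe =
  Fmul :: "'g \<Rightarrow> 'g \<Rightarrow> 'g"
  Feps :: "'g"
  FN   :: "'g \<Rightarrow> 't \<Rightarrow> bool"
  FK   :: "'g set"

text \<open>Partial algebra in the signature {meet, join, mult, ldiv, rdiv, !, 1} (and 0 for ruz).
  Undefinedness is None. Ardiv b a stands for b / a.\<close>
record 'a palg =
  Ameet :: "'a \<Rightarrow> 'a \<Rightarrow> 'a option"
  Ajoin :: "'a \<Rightarrow> 'a \<Rightarrow> 'a option"
  Amul  :: "'a \<Rightarrow> 'a \<Rightarrow> 'a option"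
  Aldiv :: "'a \<Rightarrow> 'a \<Rightarrow> 'a option"
  Ardiv :: "'a \<Rightarrow> 'a \<Rightarrow> 'a option"
  Abang :: "'a \<Rightarrow> 'a option"
  Aone  :: "'a option"
  Azero :: "'a option"

definition unital_groupoid :: "('g \<Rightarrow> 'g \<Rightarrow> 'g) \<Rightarrow> 'g \<Rightarrow> bool" where
  "unital_groupoid m e \<longleftrightarrow> (\<forall>x. m e x = x \<and> m x e = x)"

definition nuclear :: "('g \<Rightarrow> 'g \<Rightarrow> 'g) \<Rightarrow> ('g \<Rightarrow> 't \<Rightarrow> bool) \<Rightarrow> bool" where
  "nuclear m N \<longleftrightarrow> (\<exists>ld rd. \<forall>x y z.
      (N (m x y) z \<longleftrightarrow> N y (ld x z)) \<and> (N (m x y) z \<longleftrightarrow> N x (rd z y)))"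

definition sub_unital_groupoid :: "('g \<Rightarrow> 'g \<Rightarrow> 'g) \<Rightarrow> 'g \<Rightarrow> 'g set \<Rightarrow> bool" where
  "sub_unital_groupoid m e K \<longleftrightarrow> e \<in> K \<and> (\<forall>x\<in>K. \<forall>y\<in>K. m x y \<in> K)"

definition enriched_ru_frame :: "('g, 't, 'z) ruframe_scheme \<Rightarrow> bool" where
  "enriched_ru_frame F \<longleftrightarrow> unital_groupoid (Fmul F) (Feps F) \<and> nuclear (Fmul F) (FN F)
     \<and> sub_unital_groupoid (Fmul F) (Feps F) (FK F)"

definition rhd :: "('g, 't, 'z) ruframe_scheme \<Rightarrow> 'g set \<Rightarrow> 't set" where
  "rhd F X = {t. \<forall>x\<in>X. FN F x t}"

definition lhd :: "('g, 't, 'z) ruframe_scheme \<Rightarrow> 't set \<Rightarrow> 'g set" where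
  "lhd F Y = {g. \<forall>y\<in>Y. FN F g y}"

definition gammaN :: "('g, 't, 'z) ruframe_scheme \<Rightarrow> 'g set \<Rightarrow> 'g set" where
  "gammaN F X = lhd F (rhd F X)"

definition closed_set :: "('g, 't, 'z) ruframe_scheme \<Rightarrow> 'g set \<Rightarrow> bool" where
  "closed_set F X \<longleftrightarrow> gammaN F X = X"

definition cplx :: "('g, 't, 'z) ruframe_scheme \<Rightarrow> 'g set \<Rightarrow> 'g set \<Rightarrow> 'g set" where
  "cplx F X Y = {Fmul F x y | x y. x \<in> X \<and> y \<in> Y}"

definition plus_meet :: "('g, 't, 'z) ruframe_scheme \<Rightarrow> 'g set \<Rightarrow> 'g set \<Rightarrow> 'g set" where
  "plus_meet F X Y = X \<inter> Y"

definition plus_join :: "('g, 't, 'z) ruframe_scheme \<Rightarrow> 'g set \<Rightarrow> 'g set \<Rightarrow> 'g set" where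
  "plus_join F X Y = gammaN F (X \<union> Y)"

definition plus_mul :: "('g, 't, 'z) ruframe_scheme \<Rightarrow> 'g set \<Rightarrow> 'g set \<Rightarrow> 'g set" where
  "plus_mul F X Y = gammaN F (cplx F X Y)"

definition plus_ldiv :: "('g, 't, 'z) ruframe_scheme \<Rightarrow> 'g set \<Rightarrow> 'g set \<Rightarrow> 'g set" where
  "plus_ldiv F X Y = {z. cplx F X {z} \<subseteq> Y}"

definition plus_rdiv :: "('g, 't, 'z) ruframe_scheme \<Rightarrow> 'g set \<Rightarrow> 'g set \<Rightarrow> 'g set" where
  "plus_rdiv F Y X = {z. cplx F {z} X \<subseteq> Y}"

definition plus_bang :: "('g, 't, 'z) ruframe_scheme \<Rightarrow> 'g set \<Rightarrow> 'g set" where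
  "plus_bang F X = gammaN F (X \<inter> FK F)"

definition plus_one :: "('g, 't, 'z) ruframe_scheme \<Rightarrow> 'g set" where
  "plus_one F = gammaN F {Feps F}"

definition plus_zero :: "('g, 't, 'z) ruframe_scheme \<Rightarrow> 't \<Rightarrow> 'g set" where
  "plus_zero F e = lhd F {e}"

text \<open>Enriched cut-free Gentzen ru-frame (F, A) with injections ig : A \<rightarrow> G and it : A \<rightarrow> T;
  the injection of A^! into K is the restriction of ig.\<close>
definition cf_gentzen_ru ::
  "('g, 't, 'z) ruframe_scheme \<Rightarrow> ('a, 'w) palg_scheme \<Rightarrow> ('a \<Rightarrow> 'g) \<Rightarrow> ('a \<Rightarrow> 't) \<Rightarrow> bool" where
  "cf_gentzen_ru F A ig it \<longleftrightarrow>
    (let N = FN F; m = Fmul F; e = Feps F; K = FK F in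
     enriched_ru_frame F \<and> inj ig \<and> inj it \<and>
     (\<forall>a c. Abang A a = Some c \<longrightarrow> ig c \<in> K) \<and>
     (\<forall>u. Aone A = Some u \<longrightarrow> N e (it u)) \<and>
     (\<forall>a. N (ig a) (it a)) \<and>
     (\<forall>u z. Aone A = Some u \<longrightarrow> N e z \<longrightarrow> N (ig u) z) \<and>
     (\<forall>a b c z. Amul A a b = Some c \<longrightarrow> N (m (ig a) (ig b)) z \<longrightarrow> N (ig c) z) \<and>
     (\<forall>a b c x y. Amul A a b = Some c \<longrightarrow> N x (it a) \<longrightarrow> N y (it b) \<longrightarrow> N (m x y) (it c)) \<and>
     (\<forall>a b c x z. Aldiv A a b = Some c \<longrightarrow> N x (it a) \<longrightarrow> N (ig b) z \<longrightarrow> N (m x (ig c)) z) \<and>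
     (\<forall>a b c x. Aldiv A a b = Some c \<longrightarrow> N (m (ig a) x) (it b) \<longrightarrow> N x (it c)) \<and>
     (\<forall>a b c x z. Ardiv A b a = Some c \<longrightarrow> N x (it a) \<longrightarrow> N (ig b) z \<longrightarrow> N (m (ig c) x) z) \<and>
     (\<forall>a b c x. Ardiv A b a = Some c \<longrightarrow> N (m x (ig a)) (it b) \<longrightarrow> N x (it c)) \<and>
     (\<forall>a1 a2 c z. Ameet A a1 a2 = Some c \<longrightarrow> (N (ig a1) z \<or> N (ig a2) z) \<longrightarrow> N (ig c) z) \<and>
     (\<forall>a b c x. Ameet A a b = Some c \<longrightarrow> N x (it a) \<longrightarrow> N x (it b) \<longrightarrow> N x (it c)) \<and>
     (\<forall>a b c z. Ajoin A a b = Some c \<longrightarrow> N (ig a) z \<longrightarrow> N (ig b) z \<longrightarrow> N (ig c) z) \<and>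
     (\<forall>a1 a2 c x. Ajoin A a1 a2 = Some c \<longrightarrow> (N x (it a1) \<or> N x (it a2)) \<longrightarrow> N x (it c)) \<and>
     (\<forall>a c z. Abang A a = Some c \<longrightarrow> N (ig a) z \<longrightarrow> N (ig c) z) \<and>
     (\<forall>a c k. Abang A a = Some c \<longrightarrow> k \<in> K \<longrightarrow> N k (it a) \<longrightarrow> N k (it c)))"

definition cf_gentzen_ruz ::
  "('g, 't, 'z) ruframe_scheme \<Rightarrow> ('a, 'w) palg_scheme \<Rightarrow> ('a \<Rightarrow> 'g) \<Rightarrow> ('a \<Rightarrow> 't) \<Rightarrow> 't \<Rightarrow> bool" where
  "cf_gentzen_ruz F A ig it e \<longleftrightarrow> cf_gentzen_ru F A ig it \<and>
     (\<forall>u. Azero A = Some u \<longrightarrow> FN F (ig u) e \<and> (\<forall>x. FN F x e \<longrightarrow> FN F x (it u)))"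

definition gentzen_cut ::
  "('g, 't, 'z) ruframe_scheme \<Rightarrow> ('a \<Rightarrow> 'g) \<Rightarrow> ('a \<Rightarrow> 't) \<Rightarrow> bool" where
  "gentzen_cut F ig it \<longleftrightarrow> (\<forall>x a z. FN F x (it a) \<longrightarrow> FN F (ig a) z \<longrightarrow> FN F x z)"

end

theory Submission
  imports Defs
begin

theorem mainTheorem11:
  fixes F :: "('g, 't) ruframe" and A :: "'a palg"
    and ig :: "'a \<Rightarrow> 'g" and it :: "'a \<Rightarrow> 't"
  assumes G: "cf_gentzen_ru F A ig it"
  shows
   "(\<forall>u. Aone A = Some u \<longrightarrow>
        ig u \<in> plus_one F \<and> plus_one F \<subseteq> lhd F {it u})
  \<and> (\<forall>a b c X Y. Ameet A a b = Some c \<longrightarrow> closed_set F X \<longrightarrow> closed_set F Y \<longrightarrow>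
        ig a \<in> X \<longrightarrow> X \<subseteq> lhd F {it a} \<longrightarrow> ig b \<in> Y \<longrightarrow> Y \<subseteq> lhd F {it b} \<longrightarrow>
        ig c \<in> plus_meet F X Y \<and> plus_meet F X Y \<subseteq> lhd F {it c})
  \<and> (\<forall>a b c X Y. Ajoin A a b = Some c \<longrightarrow> closed_set F X \<longrightarrow> closed_set F Y \<longrightarrow>
        ig a \<in> X \<longrightarrow> X \<subseteq> lhd F {it a} \<longrightarrow> ig b \<in> Y \<longrightarrow> Y \<subseteq> lhd F {it b} \<longrightarrow>
        ig c \<in> plus_join F X Y \<and> plus_join F X Y \<subseteq> lhd F {it c})
  \<and> (\<forall>a b c X Y. Amul A a b = Some c \<longrightarrow> closed_set F X \<longrightarrow> closed_set F Y \<longrightarrow>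
        ig a \<in> X \<longrightarrow> X \<subseteq> lhd F {it a} \<longrightarrow> ig b \<in> Y \<longrightarrow> Y \<subseteq> lhd F {it b} \<longrightarrow>
        ig c \<in> plus_mul F X Y \<and> plus_mul F X Y \<subseteq> lhd F {it c})
  \<and> (\<forall>a b c X Y. Aldiv A a b = Some c \<longrightarrow> closed_set F X \<longrightarrow> closed_set F Y \<longrightarrow>
        ig a \<in> X \<longrightarrow> X \<subseteq> lhd F {it a} \<longrightarrow> ig b \<in> Y \<longrightarrow> Y \<subseteq> lhd F {it b} \<longrightarrow>
        ig c \<in> plus_ldiv F X Y \<and> plus_ldiv F X Y \<subseteq> lhd F {it c})
  \<and> (\<forall>a b c X Y. Ardiv A a b = Some c \<longrightarrow> closed_set F X \<longrightarrow> closed_set F Y \<longrightarrow>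
        ig a \<in> X \<longrightarrow> X \<subseteq> lhd F {it a} \<longrightarrow> ig b \<in> Y \<longrightarrow> Y \<subseteq> lhd F {it b} \<longrightarrow>
        ig c \<in> plus_rdiv F X Y \<and> plus_rdiv F X Y \<subseteq> lhd F {it c})
  \<and> (\<forall>a c X. Abang A a = Some c \<longrightarrow> closed_set F X \<longrightarrow>
        ig a \<in> X \<longrightarrow> X \<subseteq> lhd F {it a} \<longrightarrow>
        ig c \<in> plus_bang F X \<and> plus_bang F X \<subseteq> lhd F {it c})
  \<and> (\<forall>e u. cf_gentzen_ruz F A ig it e \<longrightarrow> Azero A = Some u \<longrightarrow>
        ig u \<in> plus_zero F e \<and> plus_zero F e \<subseteq> lhd F {it u})
  \<and> (gentzen_cut F ig it \<longrightarrow>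
        (\<forall>u. Aone A = Some u \<longrightarrow> lhd F {it u} = plus_one F)
      \<and> (\<forall>a b c. Ameet A a b = Some c \<longrightarrow>
           lhd F {it c} = plus_meet F (lhd F {it a}) (lhd F {it b}))
      \<and> (\<forall>a b c. Ajoin A a b = Some c \<longrightarrow>
           lhd F {it c} = plus_join F (lhd F {it a}) (lhd F {it b}))
      \<and> (\<forall>a b c. Amul A a b = Some c \<longrightarrow>
           lhd F {it c} = plus_mul F (lhd F {it a}) (lhd F {it b}))
      \<and> (\<forall>a b c. Aldiv A a b = Some c \<longrightarrow>
           lhd F {it c} = plus_ldiv F (lhd F {it a}) (lhd F {it b}))
      \<and> (\<forall>a b c. Ardiv A a b = Some c \<longrightarrow>
           lhd F {it c} = plus_rdiv F (lhd F {it a}) (lhd F {it b}))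
      \<and> (\<forall>a c. Abang A a = Some c \<longrightarrow>
           lhd F {it c} = plus_bang F (lhd F {it a}))
      \<and> (\<forall>e u. cf_gentzen_ruz F A ig it e \<longrightarrow> Azero A = Some u \<longrightarrow>
           lhd F {it u} = plus_zero F e))
  \<and> ((\<forall>a b. FN F (ig a) (it b) \<longrightarrow> FN F (ig b) (it a) \<longrightarrow> a = b) \<longrightarrow>
        inj (\<lambda>a. lhd F {it a}))"
proof -
  let ?N = "FN F" and ?m = "Fmul F"
  have enr: "enriched_ru_frame F" using G unfolding cf_gentzen_ru_def Let_def by (elim conjE) assumption
  have bK0: "\<forall>a c. Abang A a = Some c \<longrightarrow> ig c \<in> FK F" using G unfolding cf_gentzen_ru_def Let_def by (elim conjE) assumption
  have bK: "\<And>a c. Abang A a = Some c \<Longrightarrow> ig c \<in> FK F" using bK0 by blast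
  have oneR0: "\<forall>u. Aone A = Some u \<longrightarrow> FN F (Feps F) (it u)" using G unfolding cf_gentzen_ru_def Let_def by (elim conjE) assumption
  have oneR: "\<And>u. Aone A = Some u \<Longrightarrow> FN F (Feps F) (it u)" using oneR0 by blast
  have ax0: "\<forall>a. FN F (ig a) (it a)" using G unfolding cf_gentzen_ru_def Let_def by (elim conjE) assumption
  have ax: "\<And>a. FN F (ig a) (it a)" using ax0 by blast
  have oneL0: "\<forall>u z. Aone A = Some u \<longrightarrow> FN F (Feps F) z \<longrightarrow> FN F (ig u) z" using G unfolding cf_gentzen_ru_def Let_def by (elim conjE) assumption
  have oneL: "\<And>u z. Aone A = Some u \<Longrightarrow> FN F (Feps F) z \<Longrightarrow> FN F (ig u) z" using oneL0 by blast
  have mulL0: "\<forall>a b c z. Amul A a b = Some c \<longrightarrow> FN F (Fmul F (ig a) (ig b)) z \<longrightarrow> FN F (ig c) z" using G unfolding cf_gentzen_ru_def Let_def by (elim conjE) assumption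
  have mulL: "\<And>a b c z. Amul A a b = Some c \<Longrightarrow> FN F (Fmul F (ig a) (ig b)) z \<Longrightarrow> FN F (ig c) z" using mulL0 by blast
  have mulR0: "\<forall>a b c x y. Amul A a b = Some c \<longrightarrow> FN F x (it a) \<longrightarrow> FN F y (it b) \<longrightarrow> FN F (Fmul F x y) (it c)" using G unfolding cf_gentzen_ru_def Let_def by (elim conjE) assumption
  have mulR: "\<And>a b c x y. Amul A a b = Some c \<Longrightarrow> FN F x (it a) \<Longrightarrow> FN F y (it b) \<Longrightarrow> FN F (Fmul F x y) (it c)" using mulR0 by blast
  have ldL0: "\<forall>a b c x z. Aldiv A a b = Some c \<longrightarrow> FN F x (it a) \<longrightarrow> FN F (ig b) z \<longrightarrow> FN F (Fmul F x (ig c)) z" using G unfolding cf_gentzen_ru_def Let_def by (elim conjE) assumption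
  have ldL: "\<And>a b c x z. Aldiv A a b = Some c \<Longrightarrow> FN F x (it a) \<Longrightarrow> FN F (ig b) z \<Longrightarrow> FN F (Fmul F x (ig c)) z" using ldL0 by blast
  have ldR0: "\<forall>a b c x. Aldiv A a b = Some c \<longrightarrow> FN F (Fmul F (ig a) x) (it b) \<longrightarrow> FN F x (it c)" using G unfolding cf_gentzen_ru_def Let_def by (elim conjE) assumption
  have ldR: "\<And>a b c x. Aldiv A a b = Some c \<Longrightarrow> FN F (Fmul F (ig a) x) (it b) \<Longrightarrow> FN F x (it c)" using ldR0 by blast
  have rdL0: "\<forall>a b c x z. Ardiv A b a = Some c \<longrightarrow> FN F x (it a) \<longrightarrow> FN F (ig b) z \<longrightarrow> FN F (Fmul F (ig c) x) z" using G unfolding cf_gentzen_ru_def Let_def by (elim conjE) assumption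
  have rdL: "\<And>a b c x z. Ardiv A b a = Some c \<Longrightarrow> FN F x (it a) \<Longrightarrow> FN F (ig b) z \<Longrightarrow> FN F (Fmul F (ig c) x) z" using rdL0 by blast
  have rdR0: "\<forall>a b c x. Ardiv A b a = Some c \<longrightarrow> FN F (Fmul F x (ig a)) (it b) \<longrightarrow> FN F x (it c)" using G unfolding cf_gentzen_ru_def Let_def by (elim conjE) assumption
  have rdR: "\<And>a b c x. Ardiv A b a = Some c \<Longrightarrow> FN F (Fmul F x (ig a)) (it b) \<Longrightarrow> FN F x (it c)" using rdR0 by blast
  have meL0: "\<forall>a1 a2 c z. Ameet A a1 a2 = Some c \<longrightarrow> (FN F (ig a1) z \<or> FN F (ig a2) z) \<longrightarrow> FN F (ig c) z" using G unfolding cf_gentzen_ru_def Let_def by (elim conjE) assumption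
  have meL: "\<And>a1 a2 c z. Ameet A a1 a2 = Some c \<Longrightarrow> FN F (ig a1) z \<or> FN F (ig a2) z \<Longrightarrow> FN F (ig c) z" using meL0 by blast
  have meR0: "\<forall>a b c x. Ameet A a b = Some c \<longrightarrow> FN F x (it a) \<longrightarrow> FN F x (it b) \<longrightarrow> FN F x (it c)" using G unfolding cf_gentzen_ru_def Let_def by (elim conjE) assumption
  have meR: "\<And>a b c x. Ameet A a b = Some c \<Longrightarrow> FN F x (it a) \<Longrightarrow> FN F x (it b) \<Longrightarrow> FN F x (it c)" using meR0 by blast
  have joL0: "\<forall>a b c z. Ajoin A a b = Some c \<longrightarrow> FN F (ig a) z \<longrightarrow> FN F (ig b) z \<longrightarrow> FN F (ig c) z" using G unfolding cf_gentzen_ru_def Let_def by (elim conjE) assumption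
  have joL: "\<And>a b c z. Ajoin A a b = Some c \<Longrightarrow> FN F (ig a) z \<Longrightarrow> FN F (ig b) z \<Longrightarrow> FN F (ig c) z" using joL0 by blast
  have joR0: "\<forall>a1 a2 c x. Ajoin A a1 a2 = Some c \<longrightarrow> (FN F x (it a1) \<or> FN F x (it a2)) \<longrightarrow> FN F x (it c)" using G unfolding cf_gentzen_ru_def Let_def by (elim conjE) assumption
  have joR: "\<And>a1 a2 c x. Ajoin A a1 a2 = Some c \<Longrightarrow> FN F x (it a1) \<or> FN F x (it a2) \<Longrightarrow> FN F x (it c)" using joR0 by blast
  have bL0: "\<forall>a c z. Abang A a = Some c \<longrightarrow> FN F (ig a) z \<longrightarrow> FN F (ig c) z" using G unfolding cf_gentzen_ru_def Let_def by (elim conjE) assumption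
  have bL: "\<And>a c z. Abang A a = Some c \<Longrightarrow> FN F (ig a) z \<Longrightarrow> FN F (ig c) z" using bL0 by blast
  have bR0: "\<forall>a c k. Abang A a = Some c \<longrightarrow> k \<in> FK F \<longrightarrow> FN F k (it a) \<longrightarrow> FN F k (it c)" using G unfolding cf_gentzen_ru_def Let_def by (elim conjE) assumption
  have bR: "\<And>a c k. Abang A a = Some c \<Longrightarrow> k \<in> FK F \<Longrightarrow> FN F k (it a) \<Longrightarrow> FN F k (it c)" using bR0 by blast
  have nucl: "nuclear (Fmul F) (FN F)" using enr by (simp add: enriched_ru_frame_def)
  obtain ld rd where nuc0: "\<forall>x y z. (FN F (Fmul F x y) z \<longleftrightarrow> FN F y (ld x z)) \<and> (FN F (Fmul F x y) z \<longleftrightarrow> FN F x (rd z y))"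
    using nucl unfolding nuclear_def by (elim exE) blast
  have nuc: "\<And>x y z. (FN F (Fmul F x y) z \<longleftrightarrow> FN F y (ld x z)) \<and> (FN F (Fmul F x y) z \<longleftrightarrow> FN F x (rd z y))"
    using nuc0 by blast
  have cl: "\<And>X x. closed_set F X \<Longrightarrow> x \<in> X \<longleftrightarrow> (\<forall>z. (\<forall>y\<in>X. FN F y z) \<longrightarrow> FN F x z)"
  proof -
    fix X x assume "closed_set F X"
    then have eq: "X = lhd F (rhd F X)" by (simp add: closed_set_def gammaN_def)
    have e1: "(x \<in> X) = (x \<in> lhd F (rhd F X))" by (rule arg_cong[where f="\<lambda>S. x \<in> S", OF eq])
    have e2: "(x \<in> lhd F (rhd F X)) = (\<forall>z. (\<forall>y\<in>X. FN F y z) \<longrightarrow> FN F x z)"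
      by (simp add: lhd_def rhd_def)
    show "x \<in> X \<longleftrightarrow> (\<forall>z. (\<forall>y\<in>X. FN F y z) \<longrightarrow> FN F x z)" by (rule trans[OF e1 e2])
  qed
  have gam: "\<And>S x. x \<in> gammaN F S \<longleftrightarrow> (\<forall>z. (\<forall>y\<in>S. FN F y z) \<longrightarrow> FN F x z)"
    by (simp add: gammaN_def lhd_def rhd_def)
  have lhd1: "\<And>t x. x \<in> lhd F {t} \<longleftrightarrow> FN F x t" by (simp add: lhd_def)
  have lhdcl: "\<And>t. closed_set F (lhd F {t})"
    unfolding closed_set_def gammaN_def lhd_def rhd_def by auto
  have cpl: "\<And>X Y w. w \<in> cplx F X Y \<longleftrightarrow> (\<exists>x y. w = Fmul F x y \<and> x \<in> X \<and> y \<in> Y)"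
    by (auto simp: cplx_def)
  have P1: "\<forall>u. Aone A = Some u \<longrightarrow> ig u \<in> plus_one F \<and> plus_one F \<subseteq> lhd F {it u}"
    unfolding plus_one_def using oneL oneR by (auto simp: gam lhd1)
  have P2: "\<forall>a b c X Y. Ameet A a b = Some c \<longrightarrow> closed_set F X \<longrightarrow> closed_set F Y \<longrightarrow>
        ig a \<in> X \<longrightarrow> X \<subseteq> lhd F {it a} \<longrightarrow> ig b \<in> Y \<longrightarrow> Y \<subseteq> lhd F {it b} \<longrightarrow>
        ig c \<in> plus_meet F X Y \<and> plus_meet F X Y \<subseteq> lhd F {it c}"
  proof (intro allI impI conjI)
    fix a b c X Y assume h: "Ameet A a b = Some c" "closed_set F X" "closed_set F Y"
        "ig a \<in> X" "X \<subseteq> lhd F {it a}" "ig b \<in> Y" "Y \<subseteq> lhd F {it b}"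
    have "ig c \<in> X" using h meL cl[OF h(2)] by blast
    moreover have "ig c \<in> Y" using h meL cl[OF h(3)] by blast
    ultimately show "ig c \<in> plus_meet F X Y" by (simp add: plus_meet_def)
    show "plus_meet F X Y \<subseteq> lhd F {it c}" using h meR by (auto simp: plus_meet_def lhd1 subset_iff)
  qed
  have P3: "\<forall>a b c X Y. Ajoin A a b = Some c \<longrightarrow> closed_set F X \<longrightarrow> closed_set F Y \<longrightarrow>
        ig a \<in> X \<longrightarrow> X \<subseteq> lhd F {it a} \<longrightarrow> ig b \<in> Y \<longrightarrow> Y \<subseteq> lhd F {it b} \<longrightarrow>
        ig c \<in> plus_join F X Y \<and> plus_join F X Y \<subseteq> lhd F {it c}"
  proof (intro allI impI conjI)
    fix a b c X Y assume h: "Ajoin A a b = Some c" "closed_set F X" "closed_set F Y"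
        "ig a \<in> X" "X \<subseteq> lhd F {it a}" "ig b \<in> Y" "Y \<subseteq> lhd F {it b}"
    show "ig c \<in> plus_join F X Y" unfolding plus_join_def gam
    proof (intro allI impI)
      fix z assume "\<forall>y\<in>X \<union> Y. FN F y z"
      then have "FN F (ig a) z" "FN F (ig b) z" using h(4,6) by auto
      then show "FN F (ig c) z" using joL[OF h(1)] by blast
    qed
    have H: "\<forall>y\<in>X \<union> Y. FN F y (it c)"
    proof
      fix y assume "y \<in> X \<union> Y"
      then have "FN F y (it a) \<or> FN F y (it b)" using h(5,7) by (auto simp: lhd1)
      then show "FN F y (it c)" using joR[OF h(1)] by blast
    qed
    show "plus_join F X Y \<subseteq> lhd F {it c}"
    proof
      fix w assume "w \<in> plus_join F X Y"
      then have "\<forall>z. (\<forall>y\<in>X \<union> Y. FN F y z) \<longrightarrow> FN F w z" by (simp add: plus_join_def gam)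
      then show "w \<in> lhd F {it c}" using H by (simp add: lhd1)
    qed
  qed
  have P4: "\<forall>a b c X Y. Amul A a b = Some c \<longrightarrow> closed_set F X \<longrightarrow> closed_set F Y \<longrightarrow>
        ig a \<in> X \<longrightarrow> X \<subseteq> lhd F {it a} \<longrightarrow> ig b \<in> Y \<longrightarrow> Y \<subseteq> lhd F {it b} \<longrightarrow>
        ig c \<in> plus_mul F X Y \<and> plus_mul F X Y \<subseteq> lhd F {it c}"
  proof (intro allI impI conjI)
    fix a b c X Y assume h: "Amul A a b = Some c" "closed_set F X" "closed_set F Y"
        "ig a \<in> X" "X \<subseteq> lhd F {it a}" "ig b \<in> Y" "Y \<subseteq> lhd F {it b}"
    show "ig c \<in> plus_mul F X Y" unfolding plus_mul_def gam
    proof (intro allI impI)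
      fix z assume "\<forall>y\<in>cplx F X Y. FN F y z"
      moreover have "Fmul F (ig a) (ig b) \<in> cplx F X Y" using h(4,6) by (auto simp: cplx_def)
      ultimately have "FN F (Fmul F (ig a) (ig b)) z" by blast
      then show "FN F (ig c) z" using mulL[OF h(1)] by blast
    qed
    have H: "\<forall>y\<in>cplx F X Y. FN F y (it c)"
    proof
      fix y assume "y \<in> cplx F X Y"
      then obtain x1 y1 where y: "y = Fmul F x1 y1" "x1 \<in> X" "y1 \<in> Y" by (auto simp: cplx_def)
      then have "FN F x1 (it a)" "FN F y1 (it b)" using h(5,7) by (auto simp: lhd1)
      then show "FN F y (it c)" using mulR[OF h(1)] y(1) by blast
    qed
    show "plus_mul F X Y \<subseteq> lhd F {it c}"
    proof
      fix w assume "w \<in> plus_mul F X Y"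
      then have "\<forall>z. (\<forall>y\<in>cplx F X Y. FN F y z) \<longrightarrow> FN F w z" by (simp add: plus_mul_def gam)
      then show "w \<in> lhd F {it c}" using H by (simp add: lhd1)
    qed
  qed
  have P5: "\<forall>a b c X Y. Aldiv A a b = Some c \<longrightarrow> closed_set F X \<longrightarrow> closed_set F Y \<longrightarrow>
        ig a \<in> X \<longrightarrow> X \<subseteq> lhd F {it a} \<longrightarrow> ig b \<in> Y \<longrightarrow> Y \<subseteq> lhd F {it b} \<longrightarrow>
        ig c \<in> plus_ldiv F X Y \<and> plus_ldiv F X Y \<subseteq> lhd F {it c}"
  proof (intro allI impI conjI)
    fix a b c X Y assume h: "Aldiv A a b = Some c" "closed_set F X" "closed_set F Y"
        "ig a \<in> X" "X \<subseteq> lhd F {it a}" "ig b \<in> Y" "Y \<subseteq> lhd F {it b}"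
    have "\<And>x. x \<in> X \<Longrightarrow> Fmul F x (ig c) \<in> Y"
    proof -
      fix x assume "x \<in> X"
      then have "FN F x (it a)" using h by (auto simp: lhd1)
      then show "Fmul F x (ig c) \<in> Y" using cl[OF h(3)] h ldL by blast
    qed
    then show "ig c \<in> plus_ldiv F X Y" by (auto simp: plus_ldiv_def cplx_def)
    show "plus_ldiv F X Y \<subseteq> lhd F {it c}"
    proof
      fix w assume "w \<in> plus_ldiv F X Y"
      then have "Fmul F (ig a) w \<in> Y" using h by (auto simp: plus_ldiv_def cplx_def)
      then show "w \<in> lhd F {it c}" using h ldR by (auto simp: lhd1)
    qed
  qed
  have P6: "\<forall>a b c X Y. Ardiv A a b = Some c \<longrightarrow> closed_set F X \<longrightarrow> closed_set F Y \<longrightarrow>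
        ig a \<in> X \<longrightarrow> X \<subseteq> lhd F {it a} \<longrightarrow> ig b \<in> Y \<longrightarrow> Y \<subseteq> lhd F {it b} \<longrightarrow>
        ig c \<in> plus_rdiv F X Y \<and> plus_rdiv F X Y \<subseteq> lhd F {it c}"
  proof (intro allI impI conjI)
    fix a b c X Y assume h: "Ardiv A a b = Some c" "closed_set F X" "closed_set F Y"
        "ig a \<in> X" "X \<subseteq> lhd F {it a}" "ig b \<in> Y" "Y \<subseteq> lhd F {it b}"
    have "\<And>y. y \<in> Y \<Longrightarrow> Fmul F (ig c) y \<in> X"
    proof -
      fix y assume "y \<in> Y"
      then have "FN F y (it b)" using h by (auto simp: lhd1)
      then show "Fmul F (ig c) y \<in> X" using cl[OF h(2)] h rdL by blast
    qed
    then show "ig c \<in> plus_rdiv F X Y" by (auto simp: plus_rdiv_def cplx_def)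
    show "plus_rdiv F X Y \<subseteq> lhd F {it c}"
    proof
      fix w assume "w \<in> plus_rdiv F X Y"
      then have "Fmul F w (ig b) \<in> X" using h by (auto simp: plus_rdiv_def cplx_def)
      then show "w \<in> lhd F {it c}" using h rdR by (auto simp: lhd1)
    qed
  qed
  have P7: "\<forall>a c X. Abang A a = Some c \<longrightarrow> closed_set F X \<longrightarrow>
        ig a \<in> X \<longrightarrow> X \<subseteq> lhd F {it a} \<longrightarrow>
        ig c \<in> plus_bang F X \<and> plus_bang F X \<subseteq> lhd F {it c}"
  proof (intro allI impI conjI)
    fix a c X assume h: "Abang A a = Some c" "closed_set F X" "ig a \<in> X" "X \<subseteq> lhd F {it a}"
    have "ig c \<in> X" using h bL cl[OF h(2)] by blast
    then have "ig c \<in> X \<inter> FK F" using bK h by blast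
    then show "ig c \<in> plus_bang F X" unfolding plus_bang_def gam by blast
    have "\<forall>y\<in>X \<inter> FK F. FN F y (it c)" using h bR by (auto simp: lhd1 subset_iff)
    then show "plus_bang F X \<subseteq> lhd F {it c}" unfolding plus_bang_def by (auto simp: gam lhd1)
  qed
  have P8: "\<forall>e u. cf_gentzen_ruz F A ig it e \<longrightarrow> Azero A = Some u \<longrightarrow>
        ig u \<in> plus_zero F e \<and> plus_zero F e \<subseteq> lhd F {it u}"
    by (auto simp: cf_gentzen_ruz_def plus_zero_def lhd1)
  have P9: "gentzen_cut F ig it \<longrightarrow>
        (\<forall>u. Aone A = Some u \<longrightarrow> lhd F {it u} = plus_one F)
      \<and> (\<forall>a b c. Ameet A a b = Some c \<longrightarrow>
           lhd F {it c} = plus_meet F (lhd F {it a}) (lhd F {it b}))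
      \<and> (\<forall>a b c. Ajoin A a b = Some c \<longrightarrow>
           lhd F {it c} = plus_join F (lhd F {it a}) (lhd F {it b}))
      \<and> (\<forall>a b c. Amul A a b = Some c \<longrightarrow>
           lhd F {it c} = plus_mul F (lhd F {it a}) (lhd F {it b}))
      \<and> (\<forall>a b c. Aldiv A a b = Some c \<longrightarrow>
           lhd F {it c} = plus_ldiv F (lhd F {it a}) (lhd F {it b}))
      \<and> (\<forall>a b c. Ardiv A a b = Some c \<longrightarrow>
           lhd F {it c} = plus_rdiv F (lhd F {it a}) (lhd F {it b}))
      \<and> (\<forall>a c. Abang A a = Some c \<longrightarrow>
           lhd F {it c} = plus_bang F (lhd F {it a}))
      \<and> (\<forall>e u. cf_gentzen_ruz F A ig it e \<longrightarrow> Azero A = Some u \<longrightarrow>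
           lhd F {it u} = plus_zero F e)"
  proof (intro impI conjI allI)
    assume "gentzen_cut F ig it"
    then have cut: "\<And>x a z. FN F x (it a) \<Longrightarrow> FN F (ig a) z \<Longrightarrow> FN F x z"
      by (simp add: gentzen_cut_def)
    have la: "\<And>a. ig a \<in> lhd F {it a}" using ax by (simp add: lhd1)
    have ss: "\<And>a. lhd F {it a} \<subseteq> lhd F {it a}" by simp
    fix u assume hu: "Aone A = Some u"
    show "lhd F {it u} = plus_one F"
    proof
      show "lhd F {it u} \<subseteq> plus_one F" unfolding plus_one_def
        using cut oneL[OF hu] by (auto simp: gam lhd1)
      show "plus_one F \<subseteq> lhd F {it u}" using P1 hu by blast
    qed
  next
    assume "gentzen_cut F ig it"
    then have cut: "\<And>x a z. FN F x (it a) \<Longrightarrow> FN F (ig a) z \<Longrightarrow> FN F x z"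
      by (simp add: gentzen_cut_def)
    have la: "\<And>a. ig a \<in> lhd F {it a}" using ax by (simp add: lhd1)
    fix a b c assume h: "Ameet A a b = Some c"
    show "lhd F {it c} = plus_meet F (lhd F {it a}) (lhd F {it b})"
    proof
      show "plus_meet F (lhd F {it a}) (lhd F {it b}) \<subseteq> lhd F {it c}"
        using P2 h lhdcl la by blast
      have "FN F (ig c) (it a)" "FN F (ig c) (it b)" using meL[OF h] ax by auto
      then show "lhd F {it c} \<subseteq> plus_meet F (lhd F {it a}) (lhd F {it b})"
        using cut by (auto simp: plus_meet_def lhd1)
    qed
  next
    assume "gentzen_cut F ig it"
    then have cut: "\<And>x a z. FN F x (it a) \<Longrightarrow> FN F (ig a) z \<Longrightarrow> FN F x z"
      by (simp add: gentzen_cut_def)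
    have la: "\<And>a. ig a \<in> lhd F {it a}" using ax by (simp add: lhd1)
    fix a b c assume h: "Ajoin A a b = Some c"
    show "lhd F {it c} = plus_join F (lhd F {it a}) (lhd F {it b})"
    proof
      show "plus_join F (lhd F {it a}) (lhd F {it b}) \<subseteq> lhd F {it c}"
        using P3 h lhdcl la by blast
      show "lhd F {it c} \<subseteq> plus_join F (lhd F {it a}) (lhd F {it b})"
      proof
        fix x assume "x \<in> lhd F {it c}"
        then have x: "FN F x (it c)" by (simp add: lhd1)
        show "x \<in> plus_join F (lhd F {it a}) (lhd F {it b})" unfolding plus_join_def gam
        proof (intro allI impI)
          fix z assume "\<forall>y\<in>lhd F {it a} \<union> lhd F {it b}. FN F y z"
          then have "FN F (ig a) z" "FN F (ig b) z" using la by auto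
          then have "FN F (ig c) z" using joL[OF h] by blast
          then show "FN F x z" using cut x by blast
        qed
      qed
    qed
  next
    assume "gentzen_cut F ig it"
    then have cut: "\<And>x a z. FN F x (it a) \<Longrightarrow> FN F (ig a) z \<Longrightarrow> FN F x z"
      by (simp add: gentzen_cut_def)
    have la: "\<And>a. ig a \<in> lhd F {it a}" using ax by (simp add: lhd1)
    fix a b c assume h: "Amul A a b = Some c"
    show "lhd F {it c} = plus_mul F (lhd F {it a}) (lhd F {it b})"
    proof
      show "plus_mul F (lhd F {it a}) (lhd F {it b}) \<subseteq> lhd F {it c}"
        using P4 h lhdcl la by blast
      show "lhd F {it c} \<subseteq> plus_mul F (lhd F {it a}) (lhd F {it b})"
      proof
        fix x assume "x \<in> lhd F {it c}"
        then have x: "FN F x (it c)" by (simp add: lhd1)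
        show "x \<in> plus_mul F (lhd F {it a}) (lhd F {it b})" unfolding plus_mul_def gam
        proof (intro allI impI)
          fix z assume H: "\<forall>y\<in>cplx F (lhd F {it a}) (lhd F {it b}). FN F y z"
          have "Fmul F (ig a) (ig b) \<in> cplx F (lhd F {it a}) (lhd F {it b})"
            using la by (auto simp: cplx_def)
          then have "FN F (Fmul F (ig a) (ig b)) z" using H by blast
          then have "FN F (ig c) z" using mulL[OF h] by blast
          then show "FN F x z" using cut x by blast
        qed
      qed
    qed
  next
    assume "gentzen_cut F ig it"
    then have cut: "\<And>x a z. FN F x (it a) \<Longrightarrow> FN F (ig a) z \<Longrightarrow> FN F x z"
      by (simp add: gentzen_cut_def)
    have la: "\<And>a. ig a \<in> lhd F {it a}" using ax by (simp add: lhd1)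
    fix a b c assume h: "Aldiv A a b = Some c"
    show "lhd F {it c} = plus_ldiv F (lhd F {it a}) (lhd F {it b})"
    proof
      show "plus_ldiv F (lhd F {it a}) (lhd F {it b}) \<subseteq> lhd F {it c}"
        using P5 h lhdcl la by blast
      show "lhd F {it c} \<subseteq> plus_ldiv F (lhd F {it a}) (lhd F {it b})"
      proof
        fix x assume "x \<in> lhd F {it c}"
        then have x: "FN F x (it c)" by (simp add: lhd1)
        have "\<And>y. FN F y (it a) \<Longrightarrow> FN F (Fmul F y x) (it b)"
        proof -
          fix y assume "FN F y (it a)"
          then have "FN F (Fmul F y (ig c)) (it b)" using ldL[OF h] ax by blast
          then have "FN F (ig c) (ld y (it b))" using nuc by blast
          then have "FN F x (ld y (it b))" using cut x by blast
          then show "FN F (Fmul F y x) (it b)" using nuc by blast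
        qed
        then show "x \<in> plus_ldiv F (lhd F {it a}) (lhd F {it b})"
          by (auto simp: plus_ldiv_def cplx_def lhd1)
      qed
    qed
  next
    assume "gentzen_cut F ig it"
    then have cut: "\<And>x a z. FN F x (it a) \<Longrightarrow> FN F (ig a) z \<Longrightarrow> FN F x z"
      by (simp add: gentzen_cut_def)
    have la: "\<And>a. ig a \<in> lhd F {it a}" using ax by (simp add: lhd1)
    fix a b c assume h: "Ardiv A a b = Some c"
    show "lhd F {it c} = plus_rdiv F (lhd F {it a}) (lhd F {it b})"
    proof
      show "plus_rdiv F (lhd F {it a}) (lhd F {it b}) \<subseteq> lhd F {it c}"
        using P6 h lhdcl la by blast
      show "lhd F {it c} \<subseteq> plus_rdiv F (lhd F {it a}) (lhd F {it b})"
      proof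
        fix x assume "x \<in> lhd F {it c}"
        then have x: "FN F x (it c)" by (simp add: lhd1)
        have "\<And>y. FN F y (it b) \<Longrightarrow> FN F (Fmul F x y) (it a)"
        proof -
          fix y assume "FN F y (it b)"
          then have "FN F (Fmul F (ig c) y) (it a)" using rdL[OF h] ax by blast
          then have "FN F (ig c) (rd (it a) y)" using nuc by blast
          then have "FN F x (rd (it a) y)" using cut x by blast
          then show "FN F (Fmul F x y) (it a)" using nuc by blast
        qed
        then show "x \<in> plus_rdiv F (lhd F {it a}) (lhd F {it b})"
          by (auto simp: plus_rdiv_def cplx_def lhd1)
      qed
    qed
  next
    assume "gentzen_cut F ig it"
    then have cut: "\<And>x a z. FN F x (it a) \<Longrightarrow> FN F (ig a) z \<Longrightarrow> FN F x z"
      by (simp add: gentzen_cut_def)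
    have la: "\<And>a. ig a \<in> lhd F {it a}" using ax by (simp add: lhd1)
    fix a c assume h: "Abang A a = Some c"
    show "lhd F {it c} = plus_bang F (lhd F {it a})"
    proof
      show "plus_bang F (lhd F {it a}) \<subseteq> lhd F {it c}"
        using P7 h lhdcl la by blast
      have "ig c \<in> lhd F {it a} \<inter> FK F" using bL[OF h] ax bK[OF h] by (simp add: lhd1)
      then show "lhd F {it c} \<subseteq> plus_bang F (lhd F {it a})"
        unfolding plus_bang_def using cut by (auto simp: gam lhd1)
    qed
  next
    assume "gentzen_cut F ig it"
    then have cut: "\<And>x a z. FN F x (it a) \<Longrightarrow> FN F (ig a) z \<Longrightarrow> FN F x z"
      by (simp add: gentzen_cut_def)
    fix e u assume hz: "cf_gentzen_ruz F A ig it e" "Azero A = Some u"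
    then have z1: "FN F (ig u) e" and z2: "\<And>x. FN F x e \<Longrightarrow> FN F x (it u)"
      by (auto simp: cf_gentzen_ruz_def)
    show "lhd F {it u} = plus_zero F e"
      using z1 z2 cut by (auto simp: plus_zero_def lhd1)
  qed
  have P10: "(\<forall>a b. FN F (ig a) (it b) \<longrightarrow> FN F (ig b) (it a) \<longrightarrow> a = b) \<longrightarrow>
        inj (\<lambda>a. lhd F {it a})"
  proof (intro impI injI)
    fix a b assume h: "\<forall>a b. FN F (ig a) (it b) \<longrightarrow> FN F (ig b) (it a) \<longrightarrow> a = b"
      and e: "lhd F {it a} = lhd F {it b}"
    have "ig a \<in> lhd F {it b}" "ig b \<in> lhd F {it a}" using e ax by (auto simp: lhd1)
    then show "a = b" using h by (simp add: lhd1)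
  qed
  show ?thesis by (intro conjI; fact P1 P2 P3 P4 P5 P6 P7 P8 P9 P10)
qed

end
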